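(* Let $N>2$ and assume (H1)–(H4). For $a>0$ let $v_a$ be the solution of $(P_a)$ on $[0,R^{2-N}]$. Then for all sufficiently large $a>0$, $v_a$ has a first local maximum $M_a\in(0,R^{2-N})$. Moreover $M_a\to0$ and $v_a(M_a)\to\infty$ as $a\to\infty$.
   Context: Fix $N>2$, $R>0$, $0<\delta<2$. The function $f:\mathbb{R}\setminus\{0\}\to\mathbb{R}$ is odd and locally Lipschitz and satisfies: (H1) there exist $p>1$ and a function $g$ with $f(u)=|u|^{p-1}u+g(u)$ for all sufficiently large $|u|$, and $\lim_{u\to\infty}|g(u)|/|u|^{p}=0$; (H2) there exist $0<q<1$ and a locally Lipschitz $g_1:\mathbb{R}\to\mathbb{R}$ with $g_1(0)=0$ such that $f(u)=-\frac{1}{|u|^{q-1}u}+g_1(u)$ for all sufficiently small $|u|\neq 0$; (H3) $f$ has a unique positive zero $\beta$, with $f<0$ on $(0,\beta)$ and $f>0$ on $(\beta,\infty)$. $K:[R,\infty)\to(0,\infty)$ with $K$ and $K'$ continuous, and (H4) $\frac{rK'(r)}{K(r)}>-2(N-1)$ on $[R,\infty)$, and there exist $K_0,K_1>0$ and exponents with $N+q(N-2)<\alpha_1\leq\alpha<2(N-1)$ such that $K_0r^{-\alpha}\leq K(r)\leq K_1r^{-\alpha_1}$ on $[R,\infty)$. Define $h(t)=\frac{t^{\frac{2(N-1)}{2-N}}K(t^{\frac{1}{2-N}})}{(N-2)^2}$ for $0<t\le R^{2-N}$. The initial value problem $(P_a)$ is $$v''(t)+h(t)f(v(t))+\frac{v(t)}{t^{2-\delta}}=0\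 (t>0),\qquad v(0)=0,\ v'(0)=a,$$ understood in the integrated sense: $v\in C^1[0,R^{2-N}]$, $v(0)=0$, $h f(v)$ integrable, and $v'(t)=a-\int_0^t h(s)f(v(s))\,ds-\int_0^t s^{\delta-2}v(s)\,ds$ for all $t\in[0,R^{2-N}]$. This solution exists on all of $[0,R^{2-N}]$ and is unique. *)

theory Defs
  imports "HOL-Analysis.Analysis"
begin

definition loc_lipschitz_on :: "real set \<Rightarrow> (real \<Rightarrow> real) \<Rightarrow> bool" where
  "loc_lipschitz_on S f \<longleftrightarrow>
     (\<forall>x\<in>S. \<exists>e>0. \<exists>L. L-lipschitz_on (ball x e \<inter> S) f)"

definition hfun :: "nat \<Rightarrow> (real \<Rightarrow> real) \<Rightarrow> real \<Rightarrow> real" where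
  "hfun N K t = t powr (2 * (real N - 1) / (2 - real N)) * K (t powr (1 / (2 - real N)))
                 / (real N - 2)^2"

text \<open>v solves (P_a) on [0, R^(2-N)] in the integrated sense: v is C^1 on [0,T],
  v(0)=0, h f(v) is (Lebesgue) integrable on [0,T], and
  v'(t) = a - int_0^t h f(v) - int_0^t s^(delta-2) v(s) ds for all t in [0,T].\<close>
definition solves_Pa ::
  "nat \<Rightarrow> real \<Rightarrow> real \<Rightarrow> (real \<Rightarrow> real) \<Rightarrow> (real \<Rightarrow> real) \<Rightarrow> real \<Rightarrow> (real \<Rightarrow> real) \<Rightarrow> bool" where
  "solves_Pa N R \<delta> K f a v \<longleftrightarrow>
     (let T = R powr (2 - real N) in
      \<exists>v'. (\<forall>t\<in>{0..T}. (v has_real_derivative v' t) (at t within {0..T}))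
        \<and> continuous_on {0..T} v'
        \<and> v 0 = 0
        \<and> (\<lambda>s. hfun N K s * f (v s)) absolutely_integrable_on {0..T}
        \<and> (\<forall>t\<in>{0..T}. v' t = a - integral {0..t} (\<lambda>s. hfun N K s * f (v s))
                                - integral {0..t} (\<lambda>s. s powr (\<delta> - 2) * v s)))"

definition interior_local_max :: "real \<Rightarrow> (real \<Rightarrow> real) \<Rightarrow> real \<Rightarrow> bool" where
  "interior_local_max T v M \<longleftrightarrow>
     M \<in> {0<..<T} \<and> (\<exists>e>0. \<forall>t\<in>{0..T}. \<bar>t - M\<bar> < e \<longrightarrow> v t \<le> v M)"

definition first_local_max :: "real \<Rightarrow> (real \<Rightarrow> real) \<Rightarrow> real \<Rightarrow> bool" where
  "first_local_max T v M \<longleftrightarrow>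
     interior_local_max T v M \<and> (\<forall>s\<in>{0<..<M}. \<not> interior_local_max T v s)"

end

theory Submission
  imports Defs
begin



lemma loc_lip_cont:
  assumes "loc_lipschitz_on S f" shows "continuous_on S f"
  unfolding continuous_on_eq_continuous_within
proof
  fix x assume x: "x \<in> S"
  then obtain e L where e: "e > 0" and L: "L-lipschitz_on (ball x e \<inter> S) f"
    using assms unfolding loc_lipschitz_on_def by blast
  have "continuous_on (ball x e \<inter> S) f" using L by (rule lipschitz_on_continuous_on)
  then have "continuous (at x within (ball x e \<inter> S)) f"
    using x e by (simp add: continuous_on_eq_continuous_within)
  then show "continuous (at x within S) f"
  proof -
    have "at x within (ball x e \<inter> S) = at x within S"
      by (rule at_within_nhd[where S="ball x e"]) (use e in auto)
    then show ?thesis using \<open>continuous (at x within (ball x e \<inter> S)) f\<close>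
      by (simp add: continuous_within)
  qed  
qed

lemma f_bounded_compact:
  assumes "loc_lipschitz_on (- {0}) f" "0 < c"
  shows "\<exists>B. \<forall>u\<in>{c..d}. \<bar>f u\<bar> \<le> B"
proof -
  have "continuous_on {c..d} f"
    using loc_lip_cont[OF assms(1)] by (rule continuous_on_subset) (use assms(2) in auto)
  then have "compact (f ` {c..d})" by (rule compact_continuous_image) simp
  then obtain B where "\<forall>y\<in>f ` {c..d}. norm y \<le> B"
    using compact_imp_bounded bounded_iff by metis
  then show ?thesis by auto
qed

lemma mvt_w:
  fixes v w :: "real \<Rightarrow> real"
  assumes d: "\<forall>t\<in>{0..T}. (v has_real_derivative w t) (at t within {0..T})"
    and st: "0 \<le> s" "s < t" "t \<le> T"
  shows "\<exists>x\<in>{s<..<t}. v t - v s = w x * (t - s)"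
proof -
  have "\<exists>x\<in>{s<..<t}. v t - v s = (\<lambda>h. w x * h) (t - s)"
  proof (rule mvt_simple[OF st(2)])
    fix x assume "s \<le> x" "x \<le> t"
    then have "(v has_real_derivative w x) (at x within {0..T})" using d st by auto
    then have "(v has_real_derivative w x) (at x within {s..t})"
      by (rule DERIV_subset) (use st in auto)
    then show "(v has_derivative (\<lambda>h. w x * h)) (at x within {s..t})"
      by (simp add: has_field_derivative_def)
  qed
  then show ?thesis by auto
qed

lemma int_powr:
  fixes e t c :: real
  assumes "e > -1" "t \<ge> 0"
  shows "((\<lambda>x. c * x powr e) has_integral c * (t powr (e+1) / (e+1))) {0..t}"
  using has_integral_mult_right[OF has_integral_powr_from_0[OF assms]] by simp




lemma powr_m1: "(x::real) > 0 \<Longrightarrow> x powr (a - 1) * x = x powr a"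
proof -
  assume x: "x > 0"
  have "x powr a = x powr ((a - 1) + 1)" by simp
  also have "\<dots> = x powr (a - 1) * x powr 1" by (rule powr_add)
  also have "\<dots> = x powr (a - 1) * x" using x by simp
  finally show ?thesis by simp
qed

lemma f_large:
  fixes f g :: "real \<Rightarrow> real" and p :: real
  assumes "\<exists>U. \<forall>u. \<bar>u\<bar> \<ge> U \<longrightarrow> f u = \<bar>u\<bar> powr (p - 1) * u + g u"
      "((\<lambda>u. \<bar>g u\<bar> / \<bar>u\<bar> powr p) \<longlongrightarrow> 0) at_top"
  shows "\<exists>U2>0. \<forall>u\<ge>U2. u powr p / 2 \<le> f u \<and> f u \<le> 2 * u powr p"
proof -
  obtain U where U: "\<forall>u. \<bar>u\<bar> \<ge> U \<longrightarrow> f u = \<bar>u\<bar> powr (p - 1) * u + g u" using assms(1) by blast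
  have "eventually (\<lambda>u. \<bar>g u\<bar> / \<bar>u\<bar> powr p < 1/2) at_top"
    using order_tendstoD(2)[OF assms(2), of "1/2"] by simp
  then obtain U1 where U1: "\<forall>u\<ge>U1. \<bar>g u\<bar> / \<bar>u\<bar> powr p < 1/2"
    by (auto simp: eventually_at_top_linorder)
  define U2 where "U2 = max (max U U1) 1"
  have "u powr p / 2 \<le> f u \<and> f u \<le> 2 * u powr p" if u: "u \<ge> U2" for u
  proof -
    have u0: "u > 0" "\<bar>u\<bar> = u" using u by (auto simp: U2_def)
    have fu: "f u = u powr p + g u"
      using U u u0 powr_m1[of u p] by (auto simp: U2_def)
    have pp: "u powr p > 0" using u0 by simp
    have "\<bar>g u\<bar> / u powr p < 1/2" using U1 u u0 by (auto simp: U2_def)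
    then have "\<bar>g u\<bar> < u powr p / 2" using pp by (simp add: divide_less_eq)
    then show ?thesis using fu pp by auto
  qed
  moreover have "U2 > 0" by (simp add: U2_def)
  ultimately show ?thesis by blast
qed

lemma f_upper:
  fixes f g :: "real \<Rightarrow> real" and p \<beta> :: real
  assumes lip: "loc_lipschitz_on (- {0}) f" and b: "\<beta> > 0"
    and neg: "\<forall>u. 0 < u \<and> u < \<beta> \<longrightarrow> f u < 0"
    and "\<exists>U. \<forall>u. \<bar>u\<bar> \<ge> U \<longrightarrow> f u = \<bar>u\<bar> powr (p - 1) * u + g u"
      "((\<lambda>u. \<bar>g u\<bar> / \<bar>u\<bar> powr p) \<longlongrightarrow> 0) at_top"
  shows "\<exists>C2\<ge>0. \<forall>u>0. f u \<le> C2 + 2 * u powr p"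
proof -
  obtain U2 where U2: "U2 > 0" "\<forall>u\<ge>U2. u powr p / 2 \<le> f u \<and> f u \<le> 2 * u powr p"
    using f_large[OF assms(4,5)] by blast
  obtain B where B: "\<forall>u\<in>{\<beta>..U2}. \<bar>f u\<bar> \<le> B" using f_bounded_compact[OF lip b] by blast
  have "f u \<le> max B 0 + 2 * u powr p" if "u > 0" for u
  proof -
    have "0 \<le> u powr p" by simp
    consider "u < \<beta>" | "\<beta> \<le> u \<and> u \<le> U2" | "u \<ge> U2" by linarith
    then show ?thesis
    proof cases
      case 1
      then have "f u < 0" using neg \<open>u>0\<close> by blast
      then show ?thesis using \<open>0 \<le> u powr p\<close> by linarith
    next
      case 2
      then have "\<bar>f u\<bar> \<le> B" using B by auto
      then show ?thesis using \<open>0 \<le> u powr p\<close> by linarith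
    next
      case 3 then show ?thesis using U2 by force
    qed
  qed
  then show ?thesis by (intro exI[of _ "max B 0"]) auto
qed

lemma aux_lin: "(B::real) \<le> X \<Longrightarrow> -B \<le> y \<Longrightarrow> 0 \<le> Z \<Longrightarrow> C = P + Z + X \<Longrightarrow> 0 < P \<Longrightarrow> -C \<le> y"
  by linarith

lemma f_lower:
  fixes f g1 :: "real \<Rightarrow> real" and q \<beta> :: real
  assumes lip: "loc_lipschitz_on (- {0}) f" and b: "\<beta> > 0" and q: "q > 0"
    and g1: "loc_lipschitz_on UNIV g1" "g1 0 = 0"
    and H2: "\<exists>\<epsilon>>0. \<forall>u. 0 < \<bar>u\<bar> \<and> \<bar>u\<bar> < \<epsilon> \<longrightarrow> f u = - 1 / (\<bar>u\<bar> powr (q - 1) * u) + g1 u"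
    and fb: "f \<beta> = 0" and pos: "\<forall>u>\<beta>. f u > 0"
  shows "\<exists>Cf\<ge>0. \<forall>u>0. - Cf * u powr (- q) \<le> f u"
proof -
  obtain \<epsilon> where eps: "\<epsilon> > 0" "\<forall>u. 0 < \<bar>u\<bar> \<and> \<bar>u\<bar> < \<epsilon> \<longrightarrow> f u = - 1 / (\<bar>u\<bar> powr (q - 1) * u) + g1 u"
    using H2 by blast
  have "continuous_on UNIV g1" using loc_lip_cont[OF g1(1)] .
  then obtain d where d: "d > 0" "\<forall>x'. dist x' 0 < d \<longrightarrow> dist (g1 x') (g1 0) < 1"
    unfolding continuous_on_iff by (metis UNIV_I zero_less_one)
  define e2 where "e2 = min (min \<epsilon> d) \<beta> / 2"
  have e2: "e2 > 0" "e2 < \<epsilon>" "e2 < d" "e2 < \<beta>" using eps d b by (auto simp: e2_def)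
  obtain B where B: "\<forall>u\<in>{e2..\<beta>}. \<bar>f u\<bar> \<le> B" using f_bounded_compact[OF lip e2(1)] by blast
  have B0: "B \<ge> 0" using B e2 by force
  define Cf where "Cf = 1 + e2 powr q + B * \<beta> powr q"
  have Cf0: "Cf \<ge> 0" using B0 by (simp add: Cf_def)
  have "- Cf * u powr (- q) \<le> f u" if u: "u > 0" for u
  proof -
    have up: "u powr (-q) > 0" using u by simp
    consider "u < e2" | "e2 \<le> u \<and> u \<le> \<beta>" | "u > \<beta>" by linarith
    then show ?thesis
    proof cases
      case 1
      have fu: "f u = - 1 / (u powr (q - 1) * u) + g1 u" using eps(2) u 1 e2 by auto
      have "u powr (q - 1) * u = u powr q" using u by (rule powr_m1)
      then have fu2: "f u = - (u powr (-q)) + g1 u" using fu u by (simp add: powr_minus_divide)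
      have "\<bar>g1 u\<bar> < 1" using d(2) g1(2) u 1 e2 by (auto simp: dist_real_def)
      have "e2 powr (-q) \<le> u powr (-q)" using powr_mono2'[of "-q" u e2] q u 1 by auto
      then have "e2 powr q * e2 powr (-q) \<le> e2 powr q * u powr (-q)"
        by (intro mult_left_mono) auto
      moreover have "e2 powr q * e2 powr (-q) = 1" using e2 by (simp add: powr_add[symmetric])
      ultimately have "1 \<le> e2 powr q * u powr (-q)" by simp
      moreover have "0 \<le> B * \<beta> powr q * u powr (-q)" using B0 up by simp
      ultimately show ?thesis using fu2 \<open>\<bar>g1 u\<bar> < 1\<close> unfolding Cf_def by (simp add: algebra_simps)
    next
      case 2
      have "\<beta> powr (-q) \<le> u powr (-q)" using powr_mono2'[of "-q" u \<beta>] q u 2 by auto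
      then have "\<beta> powr q * \<beta> powr (-q) \<le> \<beta> powr q * u powr (-q)"
        by (intro mult_left_mono) auto
      moreover have "\<beta> powr q * \<beta> powr (-q) = 1" using b by (simp add: powr_add[symmetric])
      ultimately have "1 \<le> \<beta> powr q * u powr (-q)" by simp
      then have "B \<le> B * (\<beta> powr q * u powr (-q))" using B0
        by (metis mult.right_neutral mult_left_mono)
      moreover have "-B \<le> f u" using B 2 by force
      moreover have "0 \<le> e2 powr q * u powr (-q)" using up by simp
      moreover have "Cf * u powr (-q) = (u powr (-q)) + e2 powr q * u powr (-q) + B * (\<beta> powr q * u powr (-q))"
        unfolding Cf_def by (simp add: ring_distribs)
      ultimately have "- (Cf * u powr (-q)) \<le> f u" using up by (rule aux_lin)
      then show ?thesis by (simp only: mult_minus_left)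
    next
      case 3
      then have "f u > 0" using pos by blast
      moreover have "0 \<le> Cf * u powr (-q)" using Cf0 up by simp
      ultimately show ?thesis by linarith
    qed
  qed
  then show ?thesis using Cf0 by blast
qed




lemma h_bounds:
  fixes N :: nat and R K0 K1 \<alpha> \<alpha>1 s :: real and K :: "real \<Rightarrow> real"
  assumes N: "N > 2" and R: "R > 0" and K_pos: "\<forall>r\<ge>R. K r > 0"
    and Kb: "\<forall>r\<ge>R. K0 * r powr (- \<alpha>) \<le> K r \<and> K r \<le> K1 * r powr (- \<alpha>1)"
    and s: "0 < s" "s \<le> R powr (2 - real N)"
  shows "hfun N K s > 0 \<and> hfun N K s \<le> K1 / (real N - 2)^2 * s powr ((\<alpha>1 - 2 * (real N - 1)) / (real N - 2))
         \<and> K0 / (real N - 2)^2 * s powr ((\<alpha> - 2 * (real N - 1)) / (real N - 2)) \<le> hfun N K s"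
proof -
  define n where "n = real N"
  have n: "n > 2" using N by (simp add: n_def)
  define c where "c = 1 / (2 - n)"
  have c: "c < 0" using n by (simp add: c_def)
  define r where "r = s powr c"
  have "(R powr (2 - n)) powr c \<le> s powr c"
    using powr_mono2'[of c s "R powr (2 - n)"] c s by (simp add: n_def)
  moreover have "(R powr (2 - n)) powr c = R"
    using n R by (simp add: powr_powr c_def)
  ultimately have rR: "r \<ge> R" by (simp add: r_def)
  have Kr: "K r > 0" "K0 * r powr (- \<alpha>) \<le> K r" "K r \<le> K1 * r powr (- \<alpha>1)"
    using K_pos Kb rR by auto
  have rp: "r powr x = s powr (c * x)" for x by (simp add: r_def powr_powr)
  define A where "A = 2 * (n - 1) / (2 - n)"
  have hdef: "hfun N K s = s powr A * K r / (n - 2)^2"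
    by (simp add: hfun_def A_def r_def c_def n_def)
  have d: "(n - 2)^2 > 0" using n by simp
  have sA: "s powr A > 0" using s by simp
  have nz: "2 - n \<noteq> 0" "n - 2 \<noteq> 0" using n by auto
  have e1: "A + c * (- \<alpha>1) = (\<alpha>1 - 2 * (n - 1)) / (n - 2)"
  proof -
    have "A + c * (- \<alpha>1) = (2 * (n - 1) - \<alpha>1) / (2 - n)"
      by (simp add: A_def c_def diff_divide_distrib)
    also have "\<dots> = (\<alpha>1 - 2 * (n - 1)) / (n - 2)"
      by (metis minus_diff_eq minus_divide_divide)
    finally show ?thesis .
  qed
  have e0: "A + c * (- \<alpha>) = (\<alpha> - 2 * (n - 1)) / (n - 2)"
  proof -
    have "A + c * (- \<alpha>) = (2 * (n - 1) - \<alpha>) / (2 - n)"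
      by (simp add: A_def c_def diff_divide_distrib)
    also have "\<dots> = (\<alpha> - 2 * (n - 1)) / (n - 2)"
      by (metis minus_diff_eq minus_divide_divide)
    finally show ?thesis .
  qed
  have P1: "hfun N K s > 0" using hdef d sA Kr by simp
  have "s powr A * K r \<le> s powr A * (K1 * s powr (c * (- \<alpha>1)))"
    using Kr(3) sA by (simp add: rp)
  then have "hfun N K s \<le> s powr A * (K1 * s powr (c * (- \<alpha>1))) / (n - 2)^2"
    unfolding hdef using d by (intro divide_right_mono) auto
  also have "\<dots> = K1 / (n - 2)^2 * s powr (A + c * (- \<alpha>1))"
    unfolding powr_add[of s A "c * (- \<alpha>1)"] by simp
  finally have P2: "hfun N K s \<le> K1 / (n - 2)^2 * s powr ((\<alpha>1 - 2 * (n - 1)) / (n - 2))"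
    by (simp only: e1)
  have "s powr A * (K0 * s powr (c * (- \<alpha>))) \<le> s powr A * K r"
    using Kr(2) sA by (simp add: rp)
  then have "s powr A * (K0 * s powr (c * (- \<alpha>))) / (n - 2)^2 \<le> hfun N K s"
    unfolding hdef using d by (intro divide_right_mono) auto
  moreover have "s powr A * (K0 * s powr (c * (- \<alpha>))) / (n - 2)^2 = K0 / (n - 2)^2 * s powr (A + c * (- \<alpha>))"
    unfolding powr_add[of s A "c * (- \<alpha>)"] by simp
  ultimately have P3: "K0 / (n - 2)^2 * s powr ((\<alpha> - 2 * (n - 1)) / (n - 2)) \<le> hfun N K s"
    by (simp only: e0)
  from P1 P2 P3 show ?thesis by (simp add: n_def)
qed




lemma est_I1_low:
  fixes v H f :: "real \<Rightarrow> real" and t T a C1 Cf q e1 :: real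
  assumes Hint: "(\<lambda>s. H s * f (v s)) integrable_on {0..t}"
    and t: "0 < t" "t \<le> T" and H0: "H 0 = 0"
    and Hpos: "\<forall>s\<in>{0<..T}. H s > 0" and Hup: "\<forall>s\<in>{0<..T}. H s \<le> C1 * s powr e1"
    and B1: "\<forall>u>0. - Cf * u powr (- q) \<le> f u"
    and vlow: "\<forall>r\<in>{0..t}. a * r / 2 \<le> v r"
    and a: "a > 0" and C1: "C1 \<ge> 0" and Cf: "Cf \<ge> 0" and q: "q > 0" and e1: "e1 - q > -1"
  shows "- (C1 * Cf * (a/2) powr (-q)) * (t powr (e1 - q + 1) / (e1 - q + 1))
          \<le> integral {0..t} (\<lambda>s. H s * f (v s))"
proof -
  define c where "c = - (C1 * Cf * (a/2) powr (-q))"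
  have c0: "c \<le> 0" using C1 Cf by (simp add: c_def)
  have hi: "((\<lambda>s. c * s powr (e1 - q)) has_integral c * (t powr (e1 - q + 1) / (e1 - q + 1))) {0..t}"
    using int_powr[of "e1 - q" t c] e1 t by simp
  have "integral {0..t} (\<lambda>s. c * s powr (e1 - q)) \<le> integral {0..t} (\<lambda>s. H s * f (v s))"
  proof (rule Henstock_Kurzweil_Integration.integral_le)
    show "(\<lambda>s. c * s powr (e1 - q)) integrable_on {0..t}" using hi by blast
    show "(\<lambda>s. H s * f (v s)) integrable_on {0..t}" by fact
    fix s assume s: "s \<in> {0..t}"
    show "c * s powr (e1 - q) \<le> H s * f (v s)"
    proof (cases "s = 0")
      case True then show ?thesis using H0 by simp
    next
      case False
      then have s0: "s > 0" using s by auto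
      have Hs: "H s > 0" "H s \<le> C1 * s powr e1" using Hpos Hup s0 s t by auto
      have vs: "v s \<ge> a * s / 2" using vlow s by auto
      have as0: "a * s / 2 > 0" using a s0 by simp
      have cs: "c * s powr (e1 - q) = C1 * s powr e1 * (- Cf * (a * s / 2) powr (-q))"
      proof -
        have "(a * s / 2) powr (-q) = (a/2) powr (-q) * s powr (-q)"
          using a s0 by (simp add: powr_mult[symmetric])
        moreover have "s powr (e1 - q) = s powr e1 * s powr (-q)"
          by (simp add: powr_add[symmetric])
        ultimately show ?thesis by (simp add: c_def algebra_simps)
      qed
      show ?thesis
      proof (cases "f (v s) \<ge> 0")
        case True
        then have "H s * f (v s) \<ge> 0" using Hs by simp
        moreover have "c * s powr (e1 - q) \<le> 0" using c0 by (simp add: mult_nonpos_nonneg)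
        ultimately show ?thesis by linarith
      next
        case False
        have "(v s) powr (-q) \<le> (a * s / 2) powr (-q)"
          using powr_mono2'[of "-q" "a * s / 2" "v s"] q as0 vs by simp
        then have "- Cf * (a * s / 2) powr (-q) \<le> - Cf * (v s) powr (-q)"
          using Cf by (simp add: mult_left_mono)
        also have "\<dots> \<le> f (v s)" using B1 as0 vs by auto
        finally have f1: "- Cf * (a * s / 2) powr (-q) \<le> f (v s)" .
        have "C1 * s powr e1 * (- Cf * (a * s / 2) powr (-q)) \<le> C1 * s powr e1 * f (v s)"
          using f1 C1 by (intro mult_left_mono) auto
        also have "\<dots> \<le> H s * f (v s)"
          using Hs False by (intro mult_right_mono_neg) auto
        finally show ?thesis using cs by simp
      qed
    qed
  qed
  then show ?thesis using integral_unique[OF hi] by (simp add: c_def)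
qed

lemma est_I1_up:
  fixes v H f :: "real \<Rightarrow> real" and t T a C1 C2 p e1 :: real
  assumes Hint: "(\<lambda>s. H s * f (v s)) integrable_on {0..t}"
    and t: "0 < t" "t \<le> T" and H0: "H 0 = 0"
    and Hpos: "\<forall>s\<in>{0<..T}. H s > 0" and Hup: "\<forall>s\<in>{0<..T}. H s \<le> C1 * s powr e1"
    and B2: "\<forall>u>0. f u \<le> C2 + 2 * u powr p"
    and vb: "\<forall>r\<in>{0..t}. a * r / 2 \<le> v r \<and> v r \<le> 2 * a * r"
    and a: "a > 0" and C2: "C2 \<ge> 0" and p: "p > 0" and e1: "e1 > -1"
  shows "integral {0..t} (\<lambda>s. H s * f (v s)) \<le>
          C1 * C2 * (t powr (e1 + 1) / (e1 + 1)) + C1 * 2 * (2 * a) powr p * (t powr (e1 + p + 1) / (e1 + p + 1))"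
proof -
  define c where "c = C1 * 2 * (2 * a) powr p"
  have hi1: "((\<lambda>s. (C1 * C2) * s powr e1) has_integral (C1 * C2) * (t powr (e1 + 1) / (e1 + 1))) {0..t}"
    using int_powr[of e1 t "C1 * C2"] e1 t by simp
  have hi2: "((\<lambda>s. c * s powr (e1 + p)) has_integral c * (t powr (e1 + p + 1) / (e1 + p + 1))) {0..t}"
    using int_powr[of "e1 + p" t c] e1 t p by simp
  have hi: "((\<lambda>s. (C1 * C2) * s powr e1 + c * s powr (e1 + p)) has_integral
        (C1 * C2) * (t powr (e1 + 1) / (e1 + 1)) + c * (t powr (e1 + p + 1) / (e1 + p + 1))) {0..t}"
    by (rule has_integral_add[OF hi1 hi2])
  have "integral {0..t} (\<lambda>s. H s * f (v s)) \<le> integral {0..t} (\<lambda>s. (C1 * C2) * s powr e1 + c * s powr (e1 + p))"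
  proof (rule Henstock_Kurzweil_Integration.integral_le)
    show "(\<lambda>s. (C1 * C2) * s powr e1 + c * s powr (e1 + p)) integrable_on {0..t}" using hi by blast
    show "(\<lambda>s. H s * f (v s)) integrable_on {0..t}" by fact
    fix s assume s: "s \<in> {0..t}"
    show "H s * f (v s) \<le> (C1 * C2) * s powr e1 + c * s powr (e1 + p)"
    proof (cases "s = 0")
      case True then show ?thesis using H0 by simp
    next
      case False
      then have s0: "s > 0" using s by auto
      have Hs: "H s > 0" "H s \<le> C1 * s powr e1" using Hpos Hup s0 s t by auto
      have vs: "v s \<ge> a * s / 2" "v s \<le> 2 * a * s" using vb s by auto
      have vpos: "v s > 0" using vs(1) a s0 by (smt (verit) divide_pos_pos mult_pos_pos)
      have "v s powr p \<le> (2 * a * s) powr p" using powr_mono2[of p "v s" "2 * a * s"] p vpos vs by simp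
      then have fb: "f (v s) \<le> C2 + 2 * (2 * a * s) powr p" using B2 vpos by force
      have nn: "0 \<le> C2 + 2 * (2 * a * s) powr p" using C2 by simp
      have "H s * f (v s) \<le> H s * (C2 + 2 * (2 * a * s) powr p)"
        using fb Hs by (intro mult_left_mono) auto
      also have "\<dots> \<le> C1 * s powr e1 * (C2 + 2 * (2 * a * s) powr p)"
        using Hs nn by (intro mult_right_mono) auto
      also have "\<dots> = (C1 * C2) * s powr e1 + c * s powr (e1 + p)"
      proof -
        have "(2 * a * s) powr p = (2 * a) powr p * s powr p"
          using a s0 by (simp add: powr_mult[symmetric])
        moreover have "s powr (e1 + p) = s powr e1 * s powr p"
          by (simp add: powr_add)
        ultimately show ?thesis by (simp add: c_def algebra_simps)
      qed
      finally show ?thesis .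
    qed
  qed
  then show ?thesis using integral_unique[OF hi] by (simp add: c_def)
qed

lemma est_I2:
  fixes v :: "real \<Rightarrow> real" and t a \<delta> :: real
  assumes Iint: "(\<lambda>s. s powr (\<delta> - 2) * v s) integrable_on {0..t}"
    and t: "0 < t" and vb: "\<forall>r\<in>{0..t}. 0 \<le> v r \<and> v r \<le> 2 * a * r"
    and \<delta>: "\<delta> > 0"
  shows "0 \<le> integral {0..t} (\<lambda>s. s powr (\<delta> - 2) * v s)
       \<and> integral {0..t} (\<lambda>s. s powr (\<delta> - 2) * v s) \<le> 2 * a * (t powr \<delta> / \<delta>)"
proof
  show "0 \<le> integral {0..t} (\<lambda>s. s powr (\<delta> - 2) * v s)"
    using Iint vb by (intro Henstock_Kurzweil_Integration.integral_nonneg) auto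
  have hi: "((\<lambda>s. (2 * a) * s powr (\<delta> - 1)) has_integral (2 * a) * (t powr (\<delta> - 1 + 1) / (\<delta> - 1 + 1))) {0..t}"
    using int_powr[of "\<delta> - 1" t "2 * a"] \<delta> t by simp
  have "integral {0..t} (\<lambda>s. s powr (\<delta> - 2) * v s) \<le> integral {0..t} (\<lambda>s. (2 * a) * s powr (\<delta> - 1))"
  proof (rule Henstock_Kurzweil_Integration.integral_le)
    show "(\<lambda>s. (2 * a) * s powr (\<delta> - 1)) integrable_on {0..t}" using hi by blast
    show "(\<lambda>s. s powr (\<delta> - 2) * v s) integrable_on {0..t}" by fact
    fix s assume s: "s \<in> {0..t}"
    show "s powr (\<delta> - 2) * v s \<le> (2 * a) * s powr (\<delta> - 1)"
    proof (cases "s = 0")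
      case True then show ?thesis by simp
    next
      case False
      then have s0: "s > 0" using s by auto
      have "s powr (\<delta> - 2) * v s \<le> s powr (\<delta> - 2) * (2 * a * s)"
        using vb s by (intro mult_left_mono) auto
      also have "\<dots> = (2 * a) * (s powr ((\<delta> - 1) - 1) * s)" by (simp add: algebra_simps)
      also have "\<dots> = (2 * a) * s powr (\<delta> - 1)" using powr_m1[OF s0, of "\<delta> - 1"] by simp
      finally show ?thesis .
    qed
  qed
  then show "integral {0..t} (\<lambda>s. s powr (\<delta> - 2) * v s) \<le> 2 * a * (t powr \<delta> / \<delta>)"
    using integral_unique[OF hi] by simp
qed




lemma core:
  fixes v w H f :: "real \<Rightarrow> real" and T a \<tau> \<delta> q p \<beta> C1 e1 Cf C2 h0 U2 :: real
  assumes T: "T > 0"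
    and deriv: "\<forall>t\<in>{0..T}. (v has_real_derivative w t) (at t within {0..T})"
    and contw: "continuous_on {0..T} w"
    and v0: "v 0 = 0"
    and Hint: "(\<lambda>s. H s * f (v s)) integrable_on {0..T}"
    and Iint: "(\<lambda>s. s powr (\<delta> - 2) * v s) integrable_on {0..T}"
    and weq: "\<forall>t\<in>{0..T}. w t = a - integral {0..t} (\<lambda>s. H s * f (v s))
                                  - integral {0..t} (\<lambda>s. s powr (\<delta> - 2) * v s)"
    and H0: "H 0 = 0"
    and Hpos: "\<forall>s\<in>{0<..T}. H s > 0"
    and Hup: "\<forall>s\<in>{0<..T}. H s \<le> C1 * s powr e1"
    and Hlow: "\<forall>s\<in>{0<..T}. H s \<ge> h0"
    and \<delta>: "\<delta> > 0" and q: "q > 0" and e1: "e1 - q > -1" and p: "p > 0"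
    and C1: "C1 \<ge> 0" and Cf: "Cf \<ge> 0" and C2: "C2 \<ge> 0" and h0: "h0 > 0" and \<beta>: "\<beta> > 0"
    and B1: "\<forall>u>0. - Cf * u powr (- q) \<le> f u"
    and B2: "\<forall>u>0. f u \<le> C2 + 2 * u powr p"
    and B3: "\<forall>u\<ge>U2. u powr p / 2 \<le> f u"
    and fpos: "\<forall>u>\<beta>. f u > 0"
    and a: "a > 0" and \<tau>: "\<tau> > 0"
    and X1: "C1 * Cf * (a/2) powr (-q) * (T powr (e1 - q + 1) / (e1 - q + 1)) < a"
    and X2: "C1 * C2 * (T powr (e1 + 1) / (e1 + 1)) + C1 * 2 * (2 * a) powr p * (\<tau> powr (e1 + p + 1) / (e1 + p + 1))
             + 2 * a * (\<tau> powr \<delta> / \<delta>) < a / 2"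
    and VU: "a * \<tau> / 2 \<ge> U2" and V\<beta>: "a * \<tau> / 2 > \<beta>"
    and t1T: "\<tau> + 8 * a / (h0 * (a * \<tau> / 2) powr p) < T"
  shows "\<exists>M. first_local_max T v M \<and> \<tau> < M \<and> M \<le> \<tau> + 8 * a / (h0 * (a * \<tau> / 2) powr p)
             \<and> v M \<ge> a * \<tau> / 2"
proof -
  define V where "V = a * \<tau> / 2"
  define t1 where "t1 = \<tau> + 8 * a / (h0 * V powr p)"
  have V0: "V > 0" using a \<tau> by (simp add: V_def)
  have Vp: "V powr p > 0" using V0 by simp
  have t1\<tau>: "t1 > \<tau>" using a h0 Vp by (simp add: t1_def)
  have t1T': "t1 < T" using t1T by (simp add: t1_def V_def)
  have \<tau>T: "\<tau> < T" using t1\<tau> t1T' by simp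
  have vcont: "continuous_on {0..T} v" using deriv by (intro DERIV_continuous_on) auto
  have w0: "w 0 = a" using weq T by auto
  have mvt: "\<exists>x\<in>{s<..<t}. v t - v s = w x * (t - s)" if "0 \<le> s" "s < t" "t \<le> T" for s t
    using mvt_w[OF deriv that] .
  have Hint': "(\<lambda>s. H s * f (v s)) integrable_on {x..y}" if "0 \<le> x" "y \<le> T" for x y
    using integrable_on_subinterval[OF Hint] that by auto
  have Iint': "(\<lambda>s. s powr (\<delta> - 2) * v s) integrable_on {x..y}" if "0 \<le> x" "y \<le> T" for x y
    using integrable_on_subinterval[OF Iint] that by auto
  have wdiff: "w y = w x - integral {x..y} (\<lambda>s. H s * f (v s)) - integral {x..y} (\<lambda>s. s powr (\<delta> - 2) * v s)"
    if xy: "0 \<le> x" "x \<le> y" "y \<le> T" for x y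
  proof -
    have hy1: "(\<lambda>s. H s * f (v s)) integrable_on {0..y}" using Hint' xy by auto
    have hy2: "(\<lambda>s. s powr (\<delta> - 2) * v s) integrable_on {0..y}" using Iint' xy by auto
    have "integral {0..x} (\<lambda>s. H s * f (v s)) + integral {x..y} (\<lambda>s. H s * f (v s)) = integral {0..y} (\<lambda>s. H s * f (v s))"
      using Henstock_Kurzweil_Integration.integral_combine[OF xy(1,2) hy1] by simp
    moreover have "integral {0..x} (\<lambda>s. s powr (\<delta> - 2) * v s) + integral {x..y} (\<lambda>s. s powr (\<delta> - 2) * v s) = integral {0..y} (\<lambda>s. s powr (\<delta> - 2) * v s)"
      using Henstock_Kurzweil_Integration.integral_combine[OF xy(1,2) hy2] by simp
    moreover have "w x = a - integral {0..x} (\<lambda>s. H s * f (v s)) - integral {0..x} (\<lambda>s. s powr (\<delta> - 2) * v s)"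
      using weq xy by auto
    moreover have "w y = a - integral {0..y} (\<lambda>s. H s * f (v s)) - integral {0..y} (\<lambda>s. s powr (\<delta> - 2) * v s)"
      using weq xy by auto
    ultimately show ?thesis by linarith
  qed

  have step1: "\<forall>t\<in>{0..\<tau>}. a / 2 < w t \<and> w t < 2 * a"
  proof (rule ccontr)
    assume neg: "\<not> (\<forall>t\<in>{0..\<tau>}. a / 2 < w t \<and> w t < 2 * a)"
    define S where "S = {0..\<tau>} \<inter> w -` ({..a/2} \<union> {2*a..})"
    have "S \<noteq> {}" using neg by (auto simp: S_def not_less)
    moreover have "compact S"
    proof -
      have "closed S" unfolding S_def
        by (rule continuous_closed_preimage) (use contw \<tau>T in \<open>auto intro: continuous_on_subset\<close>)
      moreover have "bounded S" unfolding S_def by (rule bounded_subset[of "{0..\<tau>}"]) auto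
      ultimately show ?thesis by (simp add: compact_eq_bounded_closed)
    qed
    ultimately obtain t0 where t0S: "t0 \<in> S" and t0min: "\<forall>t\<in>S. t0 \<le> t"
      using compact_attains_inf by blast
    have t0: "0 \<le> t0" "t0 \<le> \<tau>" using t0S by (auto simp: S_def)
    have t0ne: "t0 \<noteq> 0" using t0S w0 a by (auto simp: S_def)
    then have t0p: "t0 > 0" using t0 by simp
    have below: "a / 2 < w s \<and> w s < 2 * a" if "0 \<le> s" "s < t0" for s
    proof (rule ccontr)
      assume "\<not> (a / 2 < w s \<and> w s < 2 * a)"
      then have "s \<in> S" using that t0 by (auto simp: S_def)
      then show False using t0min that by force
    qed
    have vb: "\<forall>r\<in>{0..t0}. a * r / 2 \<le> v r \<and> v r \<le> 2 * a * r"
    proof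
      fix r assume r: "r \<in> {0..t0}"
      show "a * r / 2 \<le> v r \<and> v r \<le> 2 * a * r"
      proof (cases "r = 0")
        case True then show ?thesis using v0 by simp
      next
        case False
        then have r0: "r > 0" using r by auto
        obtain x where x: "x \<in> {0<..<r}" "v r - v 0 = w x * (r - 0)"
          using mvt[of 0 r] r0 r t0 \<tau>T by auto
        have wx: "a / 2 < w x" "w x < 2 * a" using below[of x] x r by auto
        have "v r = w x * r" using x v0 by simp
        moreover have "a / 2 * r \<le> w x * r" "w x * r \<le> 2 * a * r"
          using wx r0 by (auto intro: mult_right_mono)
        ultimately show ?thesis by simp
      qed
    qed
    have vb1: "\<forall>r\<in>{0..t0}. a * r / 2 \<le> v r" using vb by blast
    have vb2: "\<forall>r\<in>{0..t0}. 0 \<le> v r \<and> v r \<le> 2 * a * r"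
    proof
      fix r assume r: "r \<in> {0..t0}"
      then have "a * r / 2 \<ge> 0" using a by simp
      moreover have "a * r / 2 \<le> v r \<and> v r \<le> 2 * a * r" using vb r by blast
      ultimately show "0 \<le> v r \<and> v r \<le> 2 * a * r" by linarith
    qed
    have t0T: "t0 \<le> T" using t0 \<tau>T by simp
    have L1: "- (C1 * Cf * (a/2) powr (-q)) * (t0 powr (e1 - q + 1) / (e1 - q + 1))
          \<le> integral {0..t0} (\<lambda>s. H s * f (v s))"
      by (rule est_I1_low[OF Hint'[of 0 t0] t0p t0T H0 Hpos Hup B1 vb1 a C1 Cf q e1]) (use t0T in auto)
    have U1: "integral {0..t0} (\<lambda>s. H s * f (v s)) \<le>
          C1 * C2 * (t0 powr (e1 + 1) / (e1 + 1)) + C1 * 2 * (2 * a) powr p * (t0 powr (e1 + p + 1) / (e1 + p + 1))"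
      by (rule est_I1_up[OF Hint'[of 0 t0] t0p t0T H0 Hpos Hup B2 vb a C2 p]) (use e1 q t0T in auto)
    have I2: "0 \<le> integral {0..t0} (\<lambda>s. s powr (\<delta> - 2) * v s)
       \<and> integral {0..t0} (\<lambda>s. s powr (\<delta> - 2) * v s) \<le> 2 * a * (t0 powr \<delta> / \<delta>)"
      by (rule est_I2[OF Iint'[of 0 t0] t0p vb2 \<delta>]) (use t0T in auto)
    have m1: "t0 powr (e1 - q + 1) \<le> T powr (e1 - q + 1)"
      using powr_mono2[of "e1 - q + 1" t0 T] e1 t0 t0T by simp
    have m2: "t0 powr (e1 + 1) \<le> T powr (e1 + 1)"
      using powr_mono2[of "e1 + 1" t0 T] e1 q t0 t0T by simp
    have m3: "t0 powr (e1 + p + 1) \<le> \<tau> powr (e1 + p + 1)"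
      using powr_mono2[of "e1 + p + 1" t0 \<tau>] e1 q p t0 by simp
    have m4: "t0 powr \<delta> \<le> \<tau> powr \<delta>"
      using powr_mono2[of \<delta> t0 \<tau>] \<delta> t0 by simp
    have k1: "C1 * Cf * (a/2) powr (-q) * (t0 powr (e1 - q + 1) / (e1 - q + 1))
          \<le> C1 * Cf * (a/2) powr (-q) * (T powr (e1 - q + 1) / (e1 - q + 1))"
      using m1 e1 C1 Cf by (intro mult_left_mono divide_right_mono) auto
    have k2: "C1 * C2 * (t0 powr (e1 + 1) / (e1 + 1)) \<le> C1 * C2 * (T powr (e1 + 1) / (e1 + 1))"
      using m2 e1 q C1 C2 by (intro mult_left_mono divide_right_mono) auto
    have k3: "C1 * 2 * (2 * a) powr p * (t0 powr (e1 + p + 1) / (e1 + p + 1))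
          \<le> C1 * 2 * (2 * a) powr p * (\<tau> powr (e1 + p + 1) / (e1 + p + 1))"
      using m3 e1 q p C1 by (intro mult_left_mono divide_right_mono) auto
    have k4: "2 * a * (t0 powr \<delta> / \<delta>) \<le> 2 * a * (\<tau> powr \<delta> / \<delta>)"
      using m4 \<delta> a by (intro mult_left_mono divide_right_mono) auto
    have wt0: "w t0 = a - integral {0..t0} (\<lambda>s. H s * f (v s)) - integral {0..t0} (\<lambda>s. s powr (\<delta> - 2) * v s)"
      using weq t0 t0T by auto
    have L1': "- (C1 * Cf * (a/2) powr (-q) * (t0 powr (e1 - q + 1) / (e1 - q + 1)))
          \<le> integral {0..t0} (\<lambda>s. H s * f (v s))"
      using L1 by (simp only: mult_minus_left)
    have "w t0 < 2 * a" using wt0 L1' I2 k1 X1 by linarith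
    moreover have "w t0 > a / 2" using wt0 U1 I2 k2 k3 k4 X2 by linarith
    ultimately show False using t0S by (auto simp: S_def)
  qed
  have v\<tau>: "v \<tau> \<ge> V"
  proof -
    obtain x where x: "x \<in> {0<..<\<tau>}" "v \<tau> - v 0 = w x * (\<tau> - 0)"
      using mvt[of 0 \<tau>] \<tau> \<tau>T by auto
    have "a / 2 < w x" using step1 x by auto
    then have "a / 2 * \<tau> \<le> w x * \<tau>" using \<tau> by (intro mult_right_mono) auto
    then show ?thesis using x v0 by (simp add: V_def)
  qed
  have w\<tau>: "w \<tau> < 2 * a" using step1 \<tau> by auto

  have ex0: "\<exists>s\<in>{0..t1}. w s \<le> 0"
  proof (rule ccontr)
    assume "\<not> (\<exists>s\<in>{0..t1}. w s \<le> 0)"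
    then have wp: "\<forall>s\<in>{0..t1}. w s > 0" by auto
    have vmono: "v s \<ge> v \<tau>" if s_in: "s \<in> {\<tau>..t1}" for s
    proof (cases "s = \<tau>")
      case False
      then have "\<tau> < s" using s_in by auto
      moreover have "s \<le> T" using s_in t1T' by auto
      ultimately obtain x where x: "x \<in> {\<tau><..<s}" "v s - v \<tau> = w x * (s - \<tau>)"
        using mvt[of \<tau> s] \<tau> by auto
      have "w x > 0" using wp x s_in \<tau> by auto
      then have "w x * (s - \<tau>) > 0" using \<open>\<tau> < s\<close> by simp
      then show ?thesis using x by linarith
    qed simp
    have pw: "h0 * (V powr p / 2) \<le> H s * f (v s)" if s: "s \<in> {\<tau>..t1}" for s
    proof -
      have vs: "v s \<ge> V" using vmono[OF s] v\<tau> by simp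
      have "V powr p \<le> v s powr p" using powr_mono2[of p V "v s"] p V0 vs by simp
      moreover have "v s powr p / 2 \<le> f (v s)" using B3 vs VU by (simp add: V_def)
      ultimately have fs: "V powr p / 2 \<le> f (v s)" by simp
      have "h0 \<le> H s" using Hlow s \<tau> t1T' by auto
      then show ?thesis using fs h0 Vp by (intro mult_mono) auto
    qed
    have J1: "h0 * (V powr p / 2) * (t1 - \<tau>) \<le> integral {\<tau>..t1} (\<lambda>s. H s * f (v s))"
    proof -
      have "integral {\<tau>..t1} (\<lambda>s. h0 * (V powr p / 2)) \<le> integral {\<tau>..t1} (\<lambda>s. H s * f (v s))"
        by (rule Henstock_Kurzweil_Integration.integral_le) (use pw Hint' \<tau> t1T' in auto)
      then show ?thesis using t1\<tau> by (simp add: mult_ac)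
    qed
    have J2: "0 \<le> integral {\<tau>..t1} (\<lambda>s. s powr (\<delta> - 2) * v s)"
    proof (rule Henstock_Kurzweil_Integration.integral_nonneg)
      show "(\<lambda>s. s powr (\<delta> - 2) * v s) integrable_on {\<tau>..t1}" using Iint' \<tau> t1T' by auto
      fix s assume "s \<in> {\<tau>..t1}"
      then have "v s \<ge> V" using vmono v\<tau> by force
      then show "0 \<le> s powr (\<delta> - 2) * v s" using V0 by simp
    qed
    have "h0 * (V powr p / 2) * (t1 - \<tau>) = 4 * a"
      using h0 Vp by (simp add: t1_def field_simps)
    moreover have "w t1 = w \<tau> - integral {\<tau>..t1} (\<lambda>s. H s * f (v s)) - integral {\<tau>..t1} (\<lambda>s. s powr (\<delta> - 2) * v s)"
      using wdiff[of \<tau> t1] \<tau> t1\<tau> t1T' by auto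
    ultimately have "w t1 < 0" using J1 J2 w\<tau> a by linarith
    moreover have "w t1 > 0" using wp t1\<tau> \<tau> by auto
    ultimately show False by simp
  qed
  define Z where "Z = {0..t1} \<inter> w -` {..0}"
  have "Z \<noteq> {}" using ex0 by (auto simp: Z_def)
  moreover have "compact Z"
  proof -
    have "closed Z" unfolding Z_def
      by (rule continuous_closed_preimage) (use contw t1T' in \<open>auto intro: continuous_on_subset\<close>)
    moreover have "bounded Z" unfolding Z_def by (rule bounded_subset[of "{0..t1}"]) auto
    ultimately show ?thesis by (simp add: compact_eq_bounded_closed)
  qed
  ultimately obtain M where MZ: "M \<in> Z" and Mmin: "\<forall>t\<in>Z. M \<le> t"
    using compact_attains_inf by blast
  have M: "0 \<le> M" "M \<le> t1" "w M \<le> 0" using MZ by (auto simp: Z_def)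
  have M\<tau>: "M > \<tau>"
  proof (rule ccontr)
    assume "\<not> \<tau> < M"
    then have "a / 2 < w M" using step1 M by auto
    then show False using M a by simp
  qed
  have MT: "M < T" using M t1T' by simp
  have wposM: "w s > 0" if "0 \<le> s" "s < M" for s
  proof (rule ccontr)
    assume "\<not> w s > 0"
    then have "s \<in> Z" using that M by (auto simp: Z_def)
    then show False using Mmin that by force
  qed
  have vleM: "v s \<le> v M" if sM: "0 \<le> s" "s \<le> M" for s
  proof (cases "s = M")
    case False
    then have "s < M" using sM by simp
    then obtain x where x: "x \<in> {s<..<M}" "v M - v s = w x * (M - s)"
      using mvt[of s M] sM MT by auto
    have "w x > 0" using wposM[of x] x sM by auto
    then have "w x * (M - s) > 0" using \<open>s < M\<close> by simp
    then show ?thesis using x by linarith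
  qed simp
  have vM: "v M \<ge> V" using vleM[of \<tau>] \<tau> M\<tau> v\<tau> by simp
  have incr: "\<exists>t\<in>{0..T}. \<bar>t - s\<bar> < e \<and> v t > v s" if s: "0 < s" "s < M" and e: "e > 0" for s e
  proof -
    define t where "t = s + min (e/2) ((M - s)/2)"
    have mm1: "min (e/2) ((M - s)/2) > 0" using s e by simp
    have mm2: "min (e/2) ((M - s)/2) \<le> (M - s)/2" by (rule min.cobounded2)
    have mm3: "min (e/2) ((M - s)/2) \<le> e/2" by (rule min.cobounded1)
    note mm = mm1 mm2 mm3
    have ts: "s < t" "t < M" "\<bar>t - s\<bar> < e" using mm s e unfolding t_def by auto
    obtain x where x: "x \<in> {s<..<t}" "v t - v s = w x * (t - s)"
      using mvt[of s t] ts s MT by auto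
    have "w x > 0" using wposM[of x] x ts s by auto
    then have "w x * (t - s) > 0" using ts by simp
    then have "v t > v s" using x by linarith
    then show ?thesis using ts s MT by (intro bexI[of _ t]) auto
  qed
  have locmax: "\<exists>e>0. \<forall>t\<in>{0..T}. \<bar>t - M\<bar> < e \<longrightarrow> v t \<le> v M"
  proof -
    have "M \<in> {0..T}" using M MT by auto
    then obtain d where d: "d > 0" "\<forall>x'\<in>{0..T}. dist x' M < d \<longrightarrow> dist (v x') (v M) < v M - \<beta>"
      using vcont V\<beta> vM unfolding continuous_on_iff V_def by (metis diff_gt_0_iff_gt order_less_le_trans)
    have vgt: "v s > \<beta>" if "s \<in> {0..T}" "\<bar>s - M\<bar> < d" for s
      using d(2) that by (auto simp: dist_real_def)
    have "v t \<le> v M" if t: "t \<in> {0..T}" "\<bar>t - M\<bar> < d" for t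
    proof (cases "t \<le> M")
      case True then show ?thesis using vleM t by auto
    next
      case False
      then have tM: "M < t" by simp
      have wneg: "w s \<le> 0" if s: "s \<in> {M..t}" for s
      proof -
        have inner: "r \<in> {M..s} \<Longrightarrow> r \<in> {0..T} \<and> \<bar>r - M\<bar> < d \<and> r > 0" for r
          using s t M M\<tau> \<tau> by auto
        have A1: "0 \<le> integral {M..s} (\<lambda>s. H s * f (v s))"
        proof (rule Henstock_Kurzweil_Integration.integral_nonneg)
          show "(\<lambda>s. H s * f (v s)) integrable_on {M..s}" using Hint' M s t by auto
          fix r assume "r \<in> {M..s}"
          then have "r \<in> {0..T}" "\<bar>r - M\<bar> < d" "r > 0" using inner by auto
          then have "H r > 0" "f (v r) > 0" using Hpos fpos vgt by auto
          then show "0 \<le> H r * f (v r)" by simp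
        qed
        have A2: "0 \<le> integral {M..s} (\<lambda>s. s powr (\<delta> - 2) * v s)"
        proof (rule Henstock_Kurzweil_Integration.integral_nonneg)
          show "(\<lambda>s. s powr (\<delta> - 2) * v s) integrable_on {M..s}" using Iint' M s t by auto
          fix r assume "r \<in> {M..s}"
          then have "r \<in> {0..T}" "\<bar>r - M\<bar> < d" using inner by auto
          then have "v r > 0" using vgt \<beta> by force
          then show "0 \<le> r powr (\<delta> - 2) * v r" by simp
        qed
        have "w s = w M - integral {M..s} (\<lambda>s. H s * f (v s)) - integral {M..s} (\<lambda>s. s powr (\<delta> - 2) * v s)"
          using wdiff[of M s] M s t by auto
        then show ?thesis using A1 A2 M by linarith
      qed
      obtain x where x: "x \<in> {M<..<t}" "v t - v M = w x * (t - M)"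
        using mvt[of M t] tM M t by auto
      have "w x \<le> 0" using wneg x by auto
      then have "w x * (t - M) \<le> 0" using tM by (simp add: mult_nonpos_nonneg)
      then show ?thesis using x by simp
    qed
    then show ?thesis using d(1) by blast
  qed
  have "first_local_max T v M"
    unfolding first_local_max_def interior_local_max_def
  proof (intro conjI ballI)
    show "M \<in> {0<..<T}" using M\<tau> \<tau> MT by auto
    show "\<exists>e>0. \<forall>t\<in>{0..T}. \<bar>t - M\<bar> < e \<longrightarrow> v t \<le> v M" by (rule locmax)
    fix s assume s: "s \<in> {0<..<M}"
    show "\<not> (s \<in> {0<..<T} \<and> (\<exists>e>0. \<forall>t\<in>{0..T}. \<bar>t - s\<bar> < e \<longrightarrow> v t \<le> v s))"
    proof
      assume "s \<in> {0<..<T} \<and> (\<exists>e>0. \<forall>t\<in>{0..T}. \<bar>t - s\<bar> < e \<longrightarrow> v t \<le> v s)"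
      then obtain e where e: "e > 0" "\<forall>t\<in>{0..T}. \<bar>t - s\<bar> < e \<longrightarrow> v t \<le> v s" by blast
      obtain t where "t \<in> {0..T}" "\<bar>t - s\<bar> < e" "v t > v s" using incr[of s e] s e by auto
      then show False using e by force
    qed
  qed
  then show ?thesis using M\<tau> M vM by (intro exI[of _ M]) (auto simp: t1_def V_def)
qed




lemma my_powr_at_top:
  assumes "(p::real) > 0"
  shows   "filterlim (\<lambda>x. x powr p) at_top at_top"
proof (subst filterlim_cong[OF refl refl])
  show "LIM x at_top. exp (p * ln x) :> at_top"
    by (rule filterlim_compose[OF exp_at_top filterlim_tendsto_pos_mult_at_top[OF tendsto_const]])
       (simp_all add: ln_at_top assms)
  show "eventually (\<lambda>x. x powr p = exp (p * ln x)) at_top"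
    using eventually_gt_at_top[of 0] by eventually_elim (simp add: powr_def)
qed

lemma ev_small:
  fixes c \<kappa> d :: real
  assumes "\<kappa> < 1" "d > 0"
  shows "eventually (\<lambda>x. c * x powr \<kappa> < d * x) at_top"
proof -
  have "((\<lambda>x. x powr (\<kappa> - 1)) \<longlongrightarrow> 0) at_top"
    using assms by (intro tendsto_neg_powr filterlim_ident) auto
  then have "((\<lambda>x. c * x powr (\<kappa> - 1)) \<longlongrightarrow> 0) at_top"
    by (rule tendsto_mult_right_zero)
  then have "eventually (\<lambda>x. c * x powr (\<kappa> - 1) < d) at_top"
    using assms(2) by (rule order_tendstoD(2))
  then show ?thesis using eventually_gt_at_top[of 0]
  proof eventually_elim
    case (elim x)
    then have "c * x powr (\<kappa> - 1) * x < d * x" by (intro mult_strict_right_mono) auto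
    moreover have "x powr (\<kappa> - 1) * x = x powr \<kappa>" using elim by (intro powr_m1) auto
    ultimately show ?case by (simp add: mult.assoc)
  qed
qed

lemma ev_zero:
  fixes c \<kappa> :: real
  assumes "\<kappa> < 0"
  shows "((\<lambda>x. c * x powr \<kappa>) \<longlongrightarrow> 0) at_top"
proof -
  have "((\<lambda>x. x powr \<kappa>) \<longlongrightarrow> 0) at_top"
    using assms by (intro tendsto_neg_powr filterlim_ident) auto
  then show ?thesis by (rule tendsto_mult_right_zero)
qed

lemma Iint_lemma:
  fixes v w :: "real \<Rightarrow> real" and T \<delta> :: real
  assumes T: "T > 0"
    and deriv: "\<forall>t\<in>{0..T}. (v has_real_derivative w t) (at t within {0..T})"
    and contw: "continuous_on {0..T} w" and v0: "v 0 = 0" and \<delta>: "\<delta> > 0"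
  shows "(\<lambda>s. s powr (\<delta> - 2) * v s) integrable_on {0..T}"
proof -
  have vcont: "continuous_on {0..T} v" using deriv by (intro DERIV_continuous_on) auto
  have "compact (w ` {0..T})" using contw by (rule compact_continuous_image) simp
  then obtain L where L: "\<forall>y\<in>w ` {0..T}. norm y \<le> L"
    using compact_imp_bounded bounded_iff by metis
  have L': "\<bar>w x\<bar> \<le> L" if "x \<in> {0..T}" for x using L that by auto
  have L0: "L \<ge> 0" using L'[of 0] T by auto
  have vb: "\<bar>v s\<bar> \<le> L * s" if s: "s \<in> {0..T}" for s
  proof (cases "s = 0")
    case True then show ?thesis using v0 by simp
  next
    case False
    then have "0 < s" using s by auto
    then obtain x where x: "x \<in> {0<..<s}" "v s - v 0 = w x * (s - 0)"
      using mvt_w[OF deriv, of 0 s] s by auto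
    have "\<bar>w x\<bar> \<le> L" using L' x s by auto
    then have "\<bar>w x\<bar> * s \<le> L * s" using \<open>0 < s\<close> by (intro mult_right_mono) auto
    then show ?thesis using x v0 \<open>0 < s\<close> by (simp add: abs_mult)
  qed
  have [measurable]: "v \<in> borel_measurable (lebesgue_on {0..T})"
    using vcont by (intro continuous_imp_measurable_on_sets_lebesgue) auto
  have "(\<lambda>s::real. s powr (\<delta> - 2)) \<in> borel_measurable borel" by measurable
  then have "(\<lambda>s::real. s powr (\<delta> - 2)) \<in> borel_measurable (restrict_space borel {0..T})"
    by (rule measurable_restrict_space1)
  moreover have "space lborel = space lebesgue" "sets borel \<subseteq> sets lebesgue"
    by force+
  ultimately have [measurable]: "(\<lambda>s::real. s powr (\<delta> - 2)) \<in> borel_measurable (lebesgue_on {0..T})"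
    by (metis borel_measurable_subalgebra mono_restrict_space space_lborel space_restrict_space)
  have meas: "(\<lambda>s. s powr (\<delta> - 2) * v s) \<in> borel_measurable (lebesgue_on {0..T})" by measurable
  have hi: "((\<lambda>s. L * s powr (\<delta> - 1)) has_integral L * (T powr (\<delta> - 1 + 1) / (\<delta> - 1 + 1))) {0..T}"
    using int_powr[of "\<delta> - 1" T L] \<delta> T by simp
  show ?thesis
  proof (rule measurable_bounded_by_integrable_imp_integrable_real[OF meas])
    show "(\<lambda>s. L * s powr (\<delta> - 1)) integrable_on {0..T}" using hi by blast
    show "{0..T} \<in> sets lebesgue" by simp
    fix s assume s: "s \<in> {0..T}"
    show "\<bar>s powr (\<delta> - 2) * v s\<bar> \<le> L * s powr (\<delta> - 1)"
    proof (cases "s = 0")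
      case True then show ?thesis using v0 by simp
    next
      case False
      then have s0: "s > 0" using s by auto
      have "\<bar>s powr (\<delta> - 2) * v s\<bar> = s powr (\<delta> - 2) * \<bar>v s\<bar>" by (simp add: abs_mult)
      also have "\<dots> \<le> s powr (\<delta> - 2) * (L * s)" using vb[OF s] by (intro mult_left_mono) auto
      also have "\<dots> = L * (s powr ((\<delta> - 1) - 1) * s)" by (simp add: algebra_simps)
      also have "\<dots> = L * s powr (\<delta> - 1)" using powr_m1[OF s0, of "\<delta> - 1"] by simp
      finally show ?thesis .
    qed
  qed
qed


lemma powr_times_self: "(a::real) > 0 \<Longrightarrow> a * a powr x = a powr (1 + x)"
  by (simp add: powr_add)

lemma powr_div_self: "(a::real) > 0 \<Longrightarrow> a / a powr x = a powr (1 - x)"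
  by (simp add: powr_diff)

lemma aux8: "(h0::real) > 0 \<Longrightarrow> X > 0 \<Longrightarrow> P > 0 \<Longrightarrow> 8 * a / (h0 * (X / P)) = 8 * P / h0 * (a / X)"
  by (simp add: field_simps)


theorem lemma2p6:
  fixes N :: nat and R \<delta> p q \<beta> K0 K1 \<alpha> \<alpha>1 :: real
    and f g g1 K K' :: "real \<Rightarrow> real"
    and v :: "real \<Rightarrow> real \<Rightarrow> real"
  assumes N: "N > 2" and R: "R > 0" and \<delta>: "0 < \<delta>" "\<delta> < 2"
    and f_odd: "\<forall>u. u \<noteq> 0 \<longrightarrow> f (- u) = - f u"
    and f_lip: "loc_lipschitz_on (- {0}) f"
    and H1: "p > 1" "\<exists>U. \<forall>u. \<bar>u\<bar> \<ge> U \<longrightarrow> f u = \<bar>u\<bar> powr (p - 1) * u + g u"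
      "((\<lambda>u. \<bar>g u\<bar> / \<bar>u\<bar> powr p) \<longlongrightarrow> 0) at_top"
    and H2: "0 < q" "q < 1" "loc_lipschitz_on UNIV g1" "g1 0 = 0"
      "\<exists>\<epsilon>>0. \<forall>u. 0 < \<bar>u\<bar> \<and> \<bar>u\<bar> < \<epsilon> \<longrightarrow> f u = - 1 / (\<bar>u\<bar> powr (q - 1) * u) + g1 u"
    and H3: "\<beta> > 0" "f \<beta> = 0" "\<forall>u>0. f u = 0 \<longrightarrow> u = \<beta>"
      "\<forall>u. 0 < u \<and> u < \<beta> \<longrightarrow> f u < 0" "\<forall>u>\<beta>. f u > 0"
    and K_pos: "\<forall>r\<ge>R. K r > 0"
    and K_deriv: "\<forall>r\<ge>R. (K has_real_derivative K' r) (at r within {R..})"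
    and K_cont: "continuous_on {R..} K" and K'_cont: "continuous_on {R..} K'"
    and H4: "\<forall>r\<ge>R. r * K' r / K r > - 2 * (real N - 1)"
      "K0 > 0" "K1 > 0"
      "real N + q * (real N - 2) < \<alpha>1" "\<alpha>1 \<le> \<alpha>" "\<alpha> < 2 * (real N - 1)"
      "\<forall>r\<ge>R. K0 * r powr (- \<alpha>) \<le> K r \<and> K r \<le> K1 * r powr (- \<alpha>1)"
    and sol: "\<forall>a>0. solves_Pa N R \<delta> K f a (v a)"
  shows "\<exists>A>0. \<exists>M :: real \<Rightarrow> real.
           (\<forall>a>A. first_local_max (R powr (2 - real N)) (v a) (M a))
         \<and> (M \<longlongrightarrow> 0) at_top
         \<and> filterlim (\<lambda>a. v a (M a)) at_top at_top"

proof -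
  define T where "T = R powr (2 - real N)"
  have T0: "T > 0" using R by (simp add: T_def)
  have N2: "real N - 2 > 0" using N by simp
  define e1 where "e1 = (\<alpha>1 - 2 * (real N - 1)) / (real N - 2)"
  define e where "e = (\<alpha> - 2 * (real N - 1)) / (real N - 2)"
  define C1 where "C1 = K1 / (real N - 2)^2"
  define h0 where "h0 = K0 / (real N - 2)^2 * T powr e"
  have e1q: "e1 - q > -1"
  proof -
    have "e1 - q + 1 = (\<alpha>1 - (real N + q * (real N - 2))) / (real N - 2)"
      using N2 by (simp add: e1_def field_simps)
    moreover have "(\<alpha>1 - (real N + q * (real N - 2))) / (real N - 2) > 0"
      using H4(4) N2 by simp
    ultimately show ?thesis by linarith
  qed
  have e1p: "e1 + 1 > q" using e1q by simp
  have eneg: "e < 0" using H4(6) N2 by (simp add: e_def divide_neg_pos)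
  have C1: "C1 \<ge> 0" using H4(3) by (simp add: C1_def)
  have h0: "h0 > 0" using H4(2) N2 T0 by (simp add: h0_def)
  have hb: "hfun N K s > 0 \<and> hfun N K s \<le> C1 * s powr e1 \<and> K0 / (real N - 2)^2 * s powr e \<le> hfun N K s"
    if "0 < s" "s \<le> T" for s
    using h_bounds[OF N R K_pos H4(7)] that by (simp add: T_def C1_def e1_def e_def)
  have Hpos: "\<forall>s\<in>{0<..T}. hfun N K s > 0" using hb by auto
  have Hup: "\<forall>s\<in>{0<..T}. hfun N K s \<le> C1 * s powr e1" using hb by auto
  have Hlow: "\<forall>s\<in>{0<..T}. hfun N K s \<ge> h0"
  proof
    fix s assume s: "s \<in> {0<..T}"
    have "T powr e \<le> s powr e" using powr_mono2'[of e s T] eneg s by auto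
    then have "K0 / (real N - 2)^2 * T powr e \<le> K0 / (real N - 2)^2 * s powr e"
      using H4(2) by (intro mult_left_mono) auto
    then show "hfun N K s \<ge> h0" using hb[of s] s by (simp add: h0_def)
  qed
  have H0: "hfun N K 0 = 0" by (simp add: hfun_def)
  have p0: "p > 0" using H1(1) by simp
  obtain Cf where Cf: "Cf \<ge> 0" "\<forall>u>0. - Cf * u powr (- q) \<le> f u"
    using f_lower[OF f_lip H3(1) H2(1) H2(3) H2(4) H2(5) H3(2) H3(5)] by blast
  obtain C2 where C2: "C2 \<ge> 0" "\<forall>u>0. f u \<le> C2 + 2 * u powr p"
    using f_upper[OF f_lip H3(1) H3(4) H1(2) H1(3)] by blast
  obtain U2 where U2: "U2 > 0" "\<forall>u\<ge>U2. u powr p / 2 \<le> f u"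
    using f_large[OF H1(2) H1(3)] by blast
  define A1 where "A1 = (p - 1) / (p + 1 + e1)"
  define B1 where "B1 = (p - 1) / p"
  define \<theta> where "\<theta> = (A1 + B1) / 2"
  have den: "p + 1 + e1 > p" using e1p H2(1) by simp
  have A1e: "A1 * (p + 1 + e1) = p - 1" using den p0 by (simp add: A1_def)
  have B1e: "B1 * p = p - 1" using p0 by (simp add: B1_def)
  have A1B1: "A1 < B1"
  proof -
    have "(p - 1) / (p + 1 + e1) < (p - 1) / p"
      using den p0 H1(1) by (intro divide_strict_left_mono) auto
    then show ?thesis by (simp add: A1_def B1_def)
  qed
  have A1pos: "A1 > 0" using H1(1) den p0 by (simp add: A1_def)
  have B1lt: "B1 < 1" using p0 by (simp add: B1_def)
  have th: "A1 < \<theta>" "\<theta> < B1" using A1B1 by (auto simp: \<theta>_def)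
  have th0: "0 < \<theta>" "\<theta> < 1" using th A1pos B1lt by auto
  define \<kappa>2 where "\<kappa>2 = p - \<theta> * (e1 + p + 1)"
  define \<kappa>3 where "\<kappa>3 = 1 - \<theta> * \<delta>"
  define \<kappa>4 where "\<kappa>4 = 1 - (1 - \<theta>) * p"
  have k2: "\<kappa>2 < 1"
  proof -
    have "A1 * (p + 1 + e1) < \<theta> * (p + 1 + e1)" using th den p0 by (intro mult_strict_right_mono) auto
    then show ?thesis using A1e by (simp add: \<kappa>2_def algebra_simps)
  qed
  have k3: "\<kappa>3 < 1" using th0 \<delta> by (simp add: \<kappa>3_def)
  have k4: "\<kappa>4 < 0"
  proof -
    have "\<theta> * p < B1 * p" using th p0 by (intro mult_strict_right_mono) auto
    then show ?thesis using B1e by (simp add: \<kappa>4_def algebra_simps)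
  qed
  define \<tau> where "\<tau> = (\<lambda>a::real. a powr (- \<theta>))"
  define t1 where "t1 = (\<lambda>a::real. \<tau> a + 8 * a / (h0 * (a * \<tau> a / 2) powr p))"
  define c1 where "c1 = C1 * Cf * (T powr (e1 - q + 1) / (e1 - q + 1)) * 2 powr q"
  define c2 where "c2 = C1 * 2 * 2 powr p / (e1 + p + 1)"
  define c3 where "c3 = 8 * 2 powr p / h0"
  have eq\<tau>: "a * \<tau> a = a powr (1 - \<theta>)" if "a > 0" for a
    using powr_times_self[OF that, of "- \<theta>"] by (simp add: \<tau>_def)
  have eqX1: "C1 * Cf * (a/2) powr (-q) * (T powr (e1 - q + 1) / (e1 - q + 1)) = c1 * a powr (-q)"
    if "a > 0" for a
  proof -
    have "(a/2) powr (-q) = a powr (-q) * 2 powr q"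
      using that by (simp add: powr_divide powr_minus_divide)
    then show ?thesis by (simp add: c1_def mult_ac)
  qed
  have eqX2: "C1 * 2 * (2 * a) powr p * (\<tau> a powr (e1 + p + 1) / (e1 + p + 1)) = c2 * a powr \<kappa>2"
    if "a > 0" for a
  proof -
    have "(2 * a) powr p = 2 powr p * a powr p" using that by (simp add: powr_mult)
    moreover have "\<tau> a powr (e1 + p + 1) = a powr (- \<theta> * (e1 + p + 1))" by (simp add: \<tau>_def powr_powr)
    moreover have "a powr p * a powr (- \<theta> * (e1 + p + 1)) = a powr \<kappa>2"
      by (simp add: \<kappa>2_def powr_add[symmetric])
    ultimately show ?thesis by (simp add: c2_def)
  qed
  have eqX3: "2 * a * (\<tau> a powr \<delta> / \<delta>) = (2 / \<delta>) * a powr \<kappa>3" if "a > 0" for a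
  proof -
    have "\<tau> a powr \<delta> = a powr (- \<theta> * \<delta>)" by (simp add: \<tau>_def powr_powr)
    moreover have "a * a powr (- \<theta> * \<delta>) = a powr \<kappa>3"
      using powr_times_self[OF that, of "- \<theta> * \<delta>"] by (simp add: \<kappa>3_def)
    ultimately show ?thesis by simp
  qed
  have eqt1: "t1 a = a powr (- \<theta>) + c3 * a powr \<kappa>4" if "a > 0" for a
  proof -
    have "(a * \<tau> a / 2) powr p = a powr ((1 - \<theta>) * p) / 2 powr p"
      using that eq\<tau>[OF that] by (simp add: powr_divide powr_powr)
    moreover have "a / a powr ((1 - \<theta>) * p) = a powr \<kappa>4"
      using powr_div_self[OF that, of "(1 - \<theta>) * p"] by (simp add: \<kappa>4_def)
    ultimately have "(a * \<tau> a / 2) powr p = a powr ((1 - \<theta>) * p) / 2 powr p"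
      "a / a powr ((1 - \<theta>) * p) = a powr \<kappa>4" by blast+
    have "8 * a / (h0 * (a * \<tau> a / 2) powr p) = c3 * (a / a powr ((1 - \<theta>) * p))"
      unfolding \<open>(a * \<tau> a / 2) powr p = a powr ((1 - \<theta>) * p) / 2 powr p\<close> c3_def
      by (rule aux8) (use h0 that in auto)
    then show ?thesis unfolding t1_def \<tau>_def
      using \<open>a / a powr ((1 - \<theta>) * p) = a powr \<kappa>4\<close> by (simp add: \<tau>_def)
  qed
  have E1: "eventually (\<lambda>a. c1 * a powr (-q) < 1 * a) at_top"
    using H2(1) by (intro ev_small) auto
  have E2a: "eventually (\<lambda>a. C1 * C2 * (T powr (e1 + 1) / (e1 + 1)) < a / 6) at_top"
    using eventually_gt_at_top[of "6 * (C1 * C2 * (T powr (e1 + 1) / (e1 + 1)))"]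
    by eventually_elim linarith
  have E2b: "eventually (\<lambda>a. c2 * a powr \<kappa>2 < 1/6 * a) at_top"
    using k2 by (intro ev_small) auto
  have E2c: "eventually (\<lambda>a. (2 / \<delta>) * a powr \<kappa>3 < 1/6 * a) at_top"
    using k3 by (intro ev_small) auto
  have lim1: "filterlim (\<lambda>a. a powr (1 - \<theta>)) at_top at_top"
    using th0 by (intro my_powr_at_top) auto
  have E3: "eventually (\<lambda>a. 2 * (U2 + \<beta>) < a powr (1 - \<theta>)) at_top"
    using lim1 unfolding filterlim_at_top_dense by blast
  have lim2: "((\<lambda>a. a powr (- \<theta>) + c3 * a powr \<kappa>4) \<longlongrightarrow> 0) at_top"
  proof -
    have "((\<lambda>a. a powr (- \<theta>)) \<longlongrightarrow> 0) at_top"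
      using th0 by (intro tendsto_neg_powr filterlim_ident) auto
    moreover have "((\<lambda>a. c3 * a powr \<kappa>4) \<longlongrightarrow> 0) at_top" using k4 by (rule ev_zero)
    ultimately show ?thesis by (rule tendsto_add_zero)
  qed
  have t1lim: "(t1 \<longlongrightarrow> 0) at_top"
  proof -
    have "eventually (\<lambda>a. a powr (- \<theta>) + c3 * a powr \<kappa>4 = t1 a) at_top"
      using eventually_gt_at_top[of 0] by eventually_elim (simp add: eqt1)
    then show ?thesis using lim2 by (simp add: tendsto_cong)
  qed
  have E4: "eventually (\<lambda>a. t1 a < T) at_top"
    using order_tendstoD(2)[OF t1lim T0] .
  define P where "P = (\<lambda>a. a > 0
      \<and> C1 * Cf * (a/2) powr (-q) * (T powr (e1 - q + 1) / (e1 - q + 1)) < a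
      \<and> C1 * C2 * (T powr (e1 + 1) / (e1 + 1)) + C1 * 2 * (2 * a) powr p * (\<tau> a powr (e1 + p + 1) / (e1 + p + 1))
             + 2 * a * (\<tau> a powr \<delta> / \<delta>) < a / 2
      \<and> a * \<tau> a / 2 \<ge> U2 \<and> a * \<tau> a / 2 > \<beta> \<and> t1 a < T)"
  have "eventually P at_top"
    using eventually_gt_at_top[of 0] E1 E2a E2b E2c E3 E4
  proof eventually_elim
    case (elim a)
    then have a: "a > 0" by simp
    have "C1 * Cf * (a/2) powr (-q) * (T powr (e1 - q + 1) / (e1 - q + 1)) < a"
      using elim eqX1[OF a] by simp
    moreover have "C1 * C2 * (T powr (e1 + 1) / (e1 + 1)) + C1 * 2 * (2 * a) powr p * (\<tau> a powr (e1 + p + 1) / (e1 + p + 1))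
             + 2 * a * (\<tau> a powr \<delta> / \<delta>) < a / 2"
      using elim(3) elim(4) elim(5) eqX2[OF a] eqX3[OF a] by linarith
    moreover have "a * \<tau> a / 2 > U2 + \<beta>" using elim eq\<tau>[OF a] by simp
    ultimately show ?case using a elim U2(1) H3(1) unfolding P_def by auto
  qed
  then obtain A0 where A0: "\<forall>a\<ge>A0. P a" by (auto simp: eventually_at_top_linorder)
  define A where "A = max A0 1"
  have A0': "A > 0" by (simp add: A_def)
  define Q where "Q = (\<lambda>a M. first_local_max T (v a) M \<and> \<tau> a < M \<and> M \<le> t1 a \<and> a * \<tau> a / 2 \<le> v a M)"
  have exQ: "\<exists>M. Q a M" if aA: "a > A" for a
  proof -
    have Pa: "P a" using A0 aA by (auto simp: A_def)
    then have a: "a > 0" by (simp add: P_def)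
    have "solves_Pa N R \<delta> K f a (v a)" using sol a by auto
    then obtain w where
      deriv: "\<forall>t\<in>{0..T}. (v a has_real_derivative w t) (at t within {0..T})" and
      contw: "continuous_on {0..T} w" and v0: "v a 0 = 0" and
      ai: "(\<lambda>s. hfun N K s * f (v a s)) absolutely_integrable_on {0..T}" and
      weq: "\<forall>t\<in>{0..T}. w t = a - integral {0..t} (\<lambda>s. hfun N K s * f (v a s))
                                - integral {0..t} (\<lambda>s. s powr (\<delta> - 2) * v a s)"
      unfolding solves_Pa_def Let_def T_def[symmetric] by blast
    have Hint: "(\<lambda>s. hfun N K s * f (v a s)) integrable_on {0..T}"
      using ai by (simp add: absolutely_integrable_on_def)
    have Iint: "(\<lambda>s. s powr (\<delta> - 2) * v a s) integrable_on {0..T}"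
      by (rule Iint_lemma[OF T0 deriv contw v0 \<delta>(1)])
    have \<tau>0: "\<tau> a > 0" using a by (simp add: \<tau>_def)
    have "\<exists>M. first_local_max T (v a) M \<and> \<tau> a < M \<and> M \<le> \<tau> a + 8 * a / (h0 * (a * \<tau> a / 2) powr p)
             \<and> v a M \<ge> a * \<tau> a / 2"
      by (rule core[OF T0 deriv contw v0 Hint Iint weq H0 Hpos Hup Hlow \<delta>(1) H2(1) e1q p0 C1 Cf(1) C2(1) h0 H3(1)
            Cf(2) C2(2) U2(2) H3(5) a \<tau>0]) (use Pa in \<open>auto simp: P_def t1_def\<close>)
    then show ?thesis by (auto simp: Q_def t1_def)
  qed
  define Mf where "Mf = (\<lambda>a. SOME M. Q a M)"
  have QM: "Q a (Mf a)" if "a > A" for a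
    unfolding Mf_def using exQ[OF that] by (rule someI_ex)
  have evA: "eventually (\<lambda>a. a > A) at_top" by (rule eventually_gt_at_top)
  show ?thesis
  proof (intro exI[of _ A] exI[of _ Mf] conjI)
    show "A > 0" by (rule A0')
    show "\<forall>a>A. first_local_max (R powr (2 - real N)) (v a) (Mf a)"
      using QM by (auto simp: Q_def T_def)
    show "(Mf \<longlongrightarrow> 0) at_top"
    proof (rule tendsto_sandwich[of "\<lambda>_. 0" Mf at_top t1 0])
      show "eventually (\<lambda>a. 0 \<le> Mf a) at_top"
        using evA
      proof eventually_elim
        case (elim a)
        then have "\<tau> a < Mf a" "\<tau> a > 0" using QM[of a] A0' by (auto simp: Q_def \<tau>_def)
        then show ?case by simp
      qed
      show "eventually (\<lambda>a. Mf a \<le> t1 a) at_top"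
        using evA by eventually_elim (use QM in \<open>auto simp: Q_def\<close>)
      show "((\<lambda>_. 0) \<longlongrightarrow> (0::real)) at_top" by simp
      show "(t1 \<longlongrightarrow> 0) at_top" by (rule t1lim)
    qed
    show "filterlim (\<lambda>a. v a (Mf a)) at_top at_top"
    proof (rule filterlim_at_top_mono)
      show "filterlim (\<lambda>a. 1/2 * a powr (1 - \<theta>)) at_top at_top"
        by (rule filterlim_tendsto_pos_mult_at_top[OF tendsto_const _ lim1]) simp
      show "eventually (\<lambda>a. 1/2 * a powr (1 - \<theta>) \<le> v a (Mf a)) at_top"
        using evA
      proof eventually_elim
        case (elim a)
        then have a: "a > 0" using A0' by simp
        have "a * \<tau> a / 2 \<le> v a (Mf a)" using QM[OF elim] by (simp add: Q_def)
        then show ?case using eq\<tau>[OF a] by simp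
      qed
    qed
  qed
qed

end
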